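(* Let $N=2^\ell$ ($\ell$ a positive integer), $\omega=e^{2\pi\mathbf{i}/N}$, $C_2\subseteq C_1\subseteq\mathbb{F}_2^n$ linear codes, $y_x,y_z\in\mathbb{F}_2^n$, $Q=Q(C_1,C_2,y_x,y_z)$ and $Q'=Q(C_1,C_2,0,0)$. Let $b\in\mathbb{Z}_N^n$ with $U(b)Q=Q$, and let $U'=\omega^{y_z\cdot b}U(b_{y_z})$, where $(b_{y_z})_i=b_i$ if $(y_z)_i=0$ and $(b_{y_z})_i=-b_i$ if $(y_z)_i=1$. Fix an encoding $\{w_1,\ldots,w_K\}$, used for both $Q$ and $Q'$. Then: (1) the logical action of $U(b)$ on $Q$ equals the logical action of $U'$ on $Q'$; (2) if the logical action of $U(b)$ on $Q$ is transversal, then the logical action of $U'$ on $Q'$ is transversal; (3) if $U(b)$ acts as the identity on $Q$, then $U'$ acts as the identity on $Q'$.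
   Context: Vectors of $\mathbb{F}_2^n$ are lifted to $\{0,1\}^n$ and $b\cdot x=\sum_ib_ix_i\bmod N$. $U(a)=\mathrm{diag}(1,\omega^a)$ for $a\in\mathbb{Z}_N$ and $U(b)=\bigotimes_iU(b_i)$. The CSS code $Q(C_1,C_2,y_x,y_z)$ is the subspace of $(\mathbb{C}^2)^{\otimes n}$ stabilized by all $(-1)^{y_x\cdot u+y_z\cdot v}X(u)Z(v)$, $u\in C_2$, $v\in C_1^\perp$ ($X(u)=\bigotimes X^{u_i}$, $Z(v)=\bigotimes Z^{v_i}$). An encoding is a set $\{w_1,\ldots,w_K\}\subseteq C_1$ whose classes form a basis of $C_1/C_2$; the logical states of $Q(C_1,C_2,y_x,y_z)$ are $|v\rangle_L=|C_2|^{-1/2}\sum_{u\in C_2}(-1)^{y_x\cdot u}|u+y_z+\sum_iv_iw_i\rangle$, $v\in\mathbb{F}_2^K$. The logical action of a unitary $U$ fixing the code is $\mathcal{E}^{-1}U\mathcal{E}$ on $(\mathbb{C}^2)^{\otimes K}$ where $\mathcal{E}:|v\rangle\mapsto|v\rangle_L$; it is transversal if it equals $\bigotimes_{i=1}^KE_i$ for unitary $E_i\in\mathbb{C}^{2\times2}$. *)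

theory Defs
  imports "HOL-Analysis.Analysis"
begin

section \<open>Binary vectors: elements of F_2^n as functions nat => bool supported below n\<close>

type_synonym bvec = "nat \<Rightarrow> bool"

definition bvecs :: "nat \<Rightarrow> bvec set" where
  "bvecs n = {x. \<forall>i\<ge>n. \<not> x i}"

definition bzero :: bvec where
  "bzero = (\<lambda>_. False)"

definition badd :: "bvec \<Rightarrow> bvec \<Rightarrow> bvec" where
  "badd x y = (\<lambda>i. x i \<noteq> y i)"

text \<open>Dot product of two binary vectors lifted to {0,1}^n (an integer; only its parity
  or its value mod N matters where it is used).\<close>
definition bdot :: "nat \<Rightarrow> bvec \<Rightarrow> bvec \<Rightarrow> nat" where
  "bdot n x y = card {i. i < n \<and> x i \<and> y i}"

text \<open>Dot product b . x = sum_i b_i x_i for b in Z_N^n (represented by integers) and x lifted to {0,1}^n.\<close>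
definition zdot :: "nat \<Rightarrow> (nat \<Rightarrow> int) \<Rightarrow> bvec \<Rightarrow> int" where
  "zdot n b x = (\<Sum>i<n. b i * of_bool (x i))"

definition lin_code :: "nat \<Rightarrow> bvec set \<Rightarrow> bool" where
  "lin_code n C \<longleftrightarrow> C \<subseteq> bvecs n \<and> bzero \<in> C \<and> (\<forall>x\<in>C. \<forall>y\<in>C. badd x y \<in> C)"

definition code_dual :: "nat \<Rightarrow> bvec set \<Rightarrow> bvec set" where
  "code_dual n C = {v \<in> bvecs n. \<forall>u\<in>C. even (bdot n u v)}"

text \<open>F_2-linear combination sum_{i<K} v_i w_i.\<close>
definition lincomb :: "nat \<Rightarrow> (nat \<Rightarrow> bvec) \<Rightarrow> bvec \<Rightarrow> bvec" where
  "lincomb K w v = (\<lambda>j. odd (card {i. i < K \<and> v i \<and> w i j}))"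

section \<open>States of (C^2)^{\<otimes> n}: complex amplitude functions on {0,1}^n\<close>

definition qstates :: "nat \<Rightarrow> (bvec \<Rightarrow> complex) set" where
  "qstates n = {\<psi>. \<forall>x. x \<notin> bvecs n \<longrightarrow> \<psi> x = 0}"

definition omega_pow :: "nat \<Rightarrow> int \<Rightarrow> complex" where
  "omega_pow N a = cis (2 * pi * of_int a / of_nat N)"

text \<open>U(b) = tensor of diag(1, omega^{b_i}); acts by |x> |-> omega^{b.x} |x>.\<close>
definition Uop :: "nat \<Rightarrow> nat \<Rightarrow> (nat \<Rightarrow> int) \<Rightarrow> (bvec \<Rightarrow> complex) \<Rightarrow> (bvec \<Rightarrow> complex)" where
  "Uop N n b \<psi> = (\<lambda>x. omega_pow N (zdot n b x) * \<psi> x)"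

text \<open>X(u) Z(v): since Z(v)|x> = (-1)^{v.x}|x> and X(u)|x> = |x+u>,
  (X(u)Z(v) psi)(x) = (-1)^{v.(x+u)} psi(x+u).\<close>
definition XZop :: "nat \<Rightarrow> bvec \<Rightarrow> bvec \<Rightarrow> (bvec \<Rightarrow> complex) \<Rightarrow> (bvec \<Rightarrow> complex)" where
  "XZop n u v \<psi> = (\<lambda>x. (-1) ^ bdot n v (badd x u) * \<psi> (badd x u))"

definition css_code :: "nat \<Rightarrow> bvec set \<Rightarrow> bvec set \<Rightarrow> bvec \<Rightarrow> bvec \<Rightarrow> (bvec \<Rightarrow> complex) set" where
  "css_code n C1 C2 yx yz =
     {\<psi> \<in> qstates n. \<forall>u\<in>C2. \<forall>v\<in>code_dual n C1.
        (\<lambda>x. (-1) ^ (bdot n yx u + bdot n yz v) * XZop n u v \<psi> x) = \<psi>}"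

text \<open>An encoding: w_1..w_K (indexed 0..K-1) in C1 whose classes form a basis of C1/C2.\<close>
definition is_encoding :: "nat \<Rightarrow> bvec set \<Rightarrow> bvec set \<Rightarrow> nat \<Rightarrow> (nat \<Rightarrow> bvec) \<Rightarrow> bool" where
  "is_encoding n C1 C2 K w \<longleftrightarrow>
     (\<forall>i<K. w i \<in> C1) \<and>
     (\<forall>c\<in>C1. \<exists>v\<in>bvecs K. badd c (lincomb K w v) \<in> C2) \<and>
     (\<forall>v\<in>bvecs K. lincomb K w v \<in> C2 \<longrightarrow> v = bzero)"

definition log_state :: "nat \<Rightarrow> bvec set \<Rightarrow> bvec \<Rightarrow> bvec \<Rightarrow> nat \<Rightarrow> (nat \<Rightarrow> bvec) \<Rightarrow> bvec \<Rightarrow> (bvec \<Rightarrow> complex)" where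
  "log_state n C2 yx yz K w v =
     (\<lambda>x. complex_of_real (1 / sqrt (real (card C2))) *
          (\<Sum>u\<in>C2. if x = badd (badd u yz) (lincomb K w v) then (-1) ^ bdot n yx u else 0))"

definition encoder :: "nat \<Rightarrow> bvec set \<Rightarrow> bvec \<Rightarrow> bvec \<Rightarrow> nat \<Rightarrow> (nat \<Rightarrow> bvec) \<Rightarrow> (bvec \<Rightarrow> complex) \<Rightarrow> (bvec \<Rightarrow> complex)" where
  "encoder n C2 yx yz K w \<phi> = (\<lambda>x. \<Sum>v\<in>bvecs K. \<phi> v * log_state n C2 yx yz K w v x)"

definition logical_action :: "nat \<Rightarrow> bvec set \<Rightarrow> bvec \<Rightarrow> bvec \<Rightarrow> nat \<Rightarrow> (nat \<Rightarrow> bvec)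
     \<Rightarrow> ((bvec \<Rightarrow> complex) \<Rightarrow> (bvec \<Rightarrow> complex)) \<Rightarrow> (bvec \<Rightarrow> complex) \<Rightarrow> (bvec \<Rightarrow> complex)" where
  "logical_action n C2 yx yz K w U \<phi> =
     inv_into (qstates K) (encoder n C2 yx yz K w) (U (encoder n C2 yx yz K w \<phi>))"

text \<open>2x2 complex matrices indexed by bool (False ~ 0, True ~ 1), entry M row col.\<close>
definition unitary2 :: "(bool \<Rightarrow> bool \<Rightarrow> complex) \<Rightarrow> bool" where
  "unitary2 M \<longleftrightarrow> (\<forall>j k. (\<Sum>i\<in>UNIV. cnj (M i j) * M i k) = (if j = k then 1 else 0))"

text \<open>Action of E_1 \<otimes> ... \<otimes> E_K on (C^2)^{\<otimes> K}.\<close>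
definition tensor_op :: "nat \<Rightarrow> (nat \<Rightarrow> bool \<Rightarrow> bool \<Rightarrow> complex) \<Rightarrow> (bvec \<Rightarrow> complex) \<Rightarrow> (bvec \<Rightarrow> complex)" where
  "tensor_op K E \<phi> =
     (\<lambda>v. if v \<in> bvecs K then (\<Sum>u\<in>bvecs K. (\<Prod>i<K. E i (v i) (u i)) * \<phi> u) else 0)"

definition transversal :: "nat \<Rightarrow> ((bvec \<Rightarrow> complex) \<Rightarrow> (bvec \<Rightarrow> complex)) \<Rightarrow> bool" where
  "transversal K L \<longleftrightarrow>
     (\<exists>E. (\<forall>i<K. unitary2 (E i)) \<and> (\<forall>\<phi>\<in>qstates K. L \<phi> = tensor_op K E \<phi>))"

definition bflip :: "nat \<Rightarrow> (nat \<Rightarrow> int) \<Rightarrow> bvec \<Rightarrow> (nat \<Rightarrow> int)" where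
  "bflip N b yz = (\<lambda>i. if yz i then (- b i) mod int N else b i)"

definition Uprime :: "nat \<Rightarrow> nat \<Rightarrow> (nat \<Rightarrow> int) \<Rightarrow> bvec \<Rightarrow> (bvec \<Rightarrow> complex) \<Rightarrow> (bvec \<Rightarrow> complex)" where
  "Uprime N n b yz \<psi> = (\<lambda>x. omega_pow N (zdot n b yz) * Uop N n (bflip N b yz) \<psi> x)"

end

theory Submission
  imports Defs
begin


lemma symdiff_parity:
  assumes "finite A" "finite B"
  shows "even (card ((A - B) \<union> (B - A))) = (even (card A) = even (card B))"
proof -
  have d: "card ((A - B) \<union> (B - A)) = card (A - B) + card (B - A)"
    by (rule card_Un_disjoint) (use assms in auto)
  have a: "card A = card (A - B) + card (A \<inter> B)"
    using assms by (metis Diff_Diff_Int card_Diff_subset_Int card_mono finite_Int inf_le1 le_add_diff_inverse2 card_Diff_subset Diff_subset finite_Diff Int_commute add.commute)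
  have b: "card B = card (B - A) + card (A \<inter> B)"
    using assms by (metis Diff_Diff_Int card_Diff_subset_Int card_mono finite_Int inf_le2 le_add_diff_inverse2 card_Diff_subset Diff_subset finite_Diff Int_commute add.commute)
  show ?thesis using d a b by auto
qed

lemma badd_simps:
  "badd x bzero = x" "badd bzero x = x" "badd x x = bzero"
  "badd (badd x y) z = badd x (badd y z)" "badd x y = badd y x"
  by (auto simp: badd_def bzero_def fun_eq_iff)

lemma badd_cancel: "(badd (badd u y) L = badd (badd u' y) L) = (u = u')"
  by (auto simp: badd_def fun_eq_iff)

lemma bdot_badd_right:
  "even (bdot n a (badd x y)) = (even (bdot n a x) = even (bdot n a y))"
proof -
  let ?A = "{i. i < n \<and> a i \<and> x i}" and ?B = "{i. i < n \<and> a i \<and> y i}"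
  have "{i. i < n \<and> a i \<and> badd x y i} = (?A - ?B) \<union> (?B - ?A)"
    by (auto simp: badd_def)
  then show ?thesis unfolding bdot_def using symdiff_parity[of ?A ?B] by simp
qed

lemma bdot_comm: "bdot n a b = bdot n b a"
  unfolding bdot_def by (metis (no_types, lifting) Collect_cong)

lemma bdot_badd_left:
  "even (bdot n (badd x y) a) = (even (bdot n x a) = even (bdot n y a))"
  using bdot_badd_right bdot_comm by metis

lemma bdot_bzero[simp]: "bdot n a bzero = 0" "bdot n bzero a = 0"
  by (auto simp: bdot_def bzero_def)

lemma lincomb_badd: "lincomb K w (badd v v') = badd (lincomb K w v) (lincomb K w v')"
proof -
  { fix j
    let ?A = "{i. i < K \<and> v i \<and> w i j}" and ?B = "{i. i < K \<and> v' i \<and> w i j}"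
    have "{i. i < K \<and> badd v v' i \<and> w i j} = (?A - ?B) \<union> (?B - ?A)"
      by (auto simp: badd_def)
    then have "odd (card {i. i < K \<and> badd v v' i \<and> w i j}) = (odd (card ?A) \<noteq> odd (card ?B))"
      using symdiff_parity[of ?A ?B] by simp }
  then show ?thesis unfolding lincomb_def badd_def by auto
qed

lemma lincomb_in:
  assumes "lin_code n C" "\<forall>i<K. w i \<in> C"
  shows "lincomb K w v \<in> C"
  using assms(2)
proof (induction K)
  case 0
  have "lincomb 0 w v = bzero" by (simp add: lincomb_def bzero_def)
  then show ?case using assms(1) by (simp add: lin_code_def)
next
  case (Suc K)
  have eq: "lincomb (Suc K) w v = badd (lincomb K w v) (if v K then w K else bzero)"
  proof -
    { fix j
      have "{i. i < Suc K \<and> v i \<and> w i j} = {i. i < K \<and> v i \<and> w i j} \<union> (if v K \<and> w K j then {K} else {})"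
        by (auto simp: less_Suc_eq)
      then have "card {i. i < Suc K \<and> v i \<and> w i j} = card {i. i < K \<and> v i \<and> w i j} + (if v K \<and> w K j then 1 else 0)"
        by auto }
    then show ?thesis unfolding lincomb_def badd_def bzero_def by (auto simp: fun_eq_iff)
  qed
  have "lincomb K w v \<in> C" using Suc by auto
  moreover have "(if v K then w K else bzero) \<in> C" using Suc.prems assms(1) by (auto simp: lin_code_def)
  ultimately show ?case using eq assms(1) by (simp add: lin_code_def)
qed

lemma finite_bvecs: "finite (bvecs K)"
proof -
  have "bvecs K \<subseteq> (\<lambda>S i. i \<in> S) ` Pow {..<K}"
  proof
    fix x assume "x \<in> bvecs K"
    then have "x = (\<lambda>i. i \<in> {i. x i})" "{i. x i} \<in> Pow {..<K}"
      by (auto simp: bvecs_def) (meson not_le)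
    then show "x \<in> (\<lambda>S i. i \<in> S) ` Pow {..<K}" by blast
  qed
  then show ?thesis by (rule finite_subset) auto
qed

lemma badd_bvecs: "x \<in> bvecs n \<Longrightarrow> y \<in> bvecs n \<Longrightarrow> badd x y \<in> bvecs n"
  by (auto simp: bvecs_def badd_def)

lemma neg1_eq: "even k = even m \<Longrightarrow> (-1::complex) ^ k = (-1) ^ m"
  by (metis neg_one_even_power neg_one_odd_power)



lemma omega_mult: "omega_pow N a * omega_pow N b = omega_pow N (a + b)"
  unfolding omega_pow_def cis_mult by (simp add: add_divide_distrib distrib_left)

lemma omega_mod: assumes "N > 0" shows "omega_pow N (a mod int N) = omega_pow N a"
proof -
  have "a = a mod int N + int N * (a div int N)" by simp
  then have h: "real_of_int a = real_of_int (a mod int N) + real N * real_of_int (a div int N)"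
    by (metis of_int_add of_int_mult of_int_of_nat_eq)
  have "2 * pi * of_int a / of_nat N = 2 * pi * of_int (a mod int N) / of_nat N + 2 * pi * of_int (a div int N)"
    using assms by (subst h) (simp add: field_simps)
  then have "cis (2 * pi * of_int a / of_nat N) = cis (2 * pi * of_int (a mod int N) / of_nat N) * cis (2 * pi * of_int (a div int N))"
    by (simp only: cis_mult)
  then show ?thesis unfolding omega_pow_def by simp
qed

lemma omega_cong: "N > 0 \<Longrightarrow> a mod int N = b mod int N \<Longrightarrow> omega_pow N a = omega_pow N b"
  by (metis omega_mod)

lemma key_identity:
  assumes "N > 0"
  shows "omega_pow N (zdot n b yz) * omega_pow N (zdot n (bflip N b yz) x) = omega_pow N (zdot n b (badd x yz))"
proof -
  have "(zdot n b yz + zdot n (bflip N b yz) x) mod int N = zdot n b (badd x yz) mod int N"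
  proof -
    have "zdot n b yz + zdot n (bflip N b yz) x = (\<Sum>i<n. b i * of_bool (yz i) + bflip N b yz i * of_bool (x i))"
      unfolding zdot_def by (simp add: sum.distrib)
    also have "\<dots> mod int N = (\<Sum>i<n. (b i * of_bool (yz i) + bflip N b yz i * of_bool (x i)) mod int N) mod int N"
      by (simp add: mod_sum_eq)
    also have "\<dots> = (\<Sum>i<n. (b i * of_bool (badd x yz i)) mod int N) mod int N"
    proof (rule arg_cong[where f = "\<lambda>t. t mod int N"], rule sum.cong)
      fix i
      show "(b i * of_bool (yz i) + bflip N b yz i * of_bool (x i)) mod int N = (b i * of_bool (badd x yz i)) mod int N"
      proof (cases "yz i")
        case True
        then show ?thesis
          by (cases "x i") (simp_all add: bflip_def badd_def mod_add_right_eq)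
      next
        case False
        then show ?thesis by (simp add: bflip_def badd_def)
      qed
    qed simp
    also have "\<dots> = zdot n b (badd x yz) mod int N"
      unfolding zdot_def by (simp add: mod_sum_eq)
    finally show ?thesis .
  qed
  then show ?thesis unfolding omega_mult by (rule omega_cong[OF assms])
qed


definition unitv :: "nat \<Rightarrow> bvec" where "unitv m = (\<lambda>i. i = m)"

lemma bdot_unitv: "m < M \<Longrightarrow> bdot M c (unitv m) = (if c m then 1 else 0)"
proof -
  assume "m < M"
  then have "{i. i < M \<and> c i \<and> unitv m i} = (if c m then {m} else {})"
    by (auto simp: unitv_def)
  then show ?thesis by (simp add: bdot_def)
qed

lemma badd_cancel_left: "badd x (badd x y) = y"
  by (auto simp: badd_def fun_eq_iff)

lemma bvecs_SucD: "x \<in> bvecs (Suc m) \<Longrightarrow> \<not> x m \<Longrightarrow> x \<in> bvecs m"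
  unfolding bvecs_def
proof (clarify)
  fix i assume a: "\<forall>i\<ge>Suc m. \<not> x i" "\<not> x m" "m \<le> i" "x i"
  show False using a by (cases "i = m") auto
qed

lemma dual_sep:
  assumes "C \<subseteq> bvecs m" "bzero \<in> C" "\<forall>x\<in>C. \<forall>y\<in>C. badd x y \<in> C"
    "x \<in> bvecs m" "x \<notin> C" "m \<le> M"
  shows "\<exists>v\<in>bvecs m. (\<forall>c\<in>C. even (bdot M c v)) \<and> odd (bdot M x v)"
  using assms
proof (induction m arbitrary: C x)
  case 0
  then have "x = bzero" by (auto simp: bvecs_def bzero_def)
  then show ?case using 0 by auto
next
  case (Suc m C x)
  have mM: "m < M" using Suc.prems by simp
  have ue: "unitv m \<in> bvecs (Suc m)" by (auto simp: bvecs_def unitv_def)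
  have sub: "bvecs m \<subseteq> bvecs (Suc m)" by (auto simp: bvecs_def)
  show ?case
  proof (cases "\<exists>c0\<in>C. c0 m")
    case True
    then obtain c0 where c0: "c0 \<in> C" "c0 m" by blast
    define C' where "C' = {c\<in>C. \<not> c m}"
    define x' where "x' = (if x m then badd x c0 else x)"
    have C'sub: "C' \<subseteq> bvecs m" using Suc.prems(1) unfolding C'_def
      by (auto intro: bvecs_SucD)
    have z: "bzero \<in> C'" using Suc.prems(2) by (simp add: C'_def bzero_def)
    have cl: "\<forall>x\<in>C'. \<forall>y\<in>C'. badd x y \<in> C'" using Suc.prems(3) by (auto simp: C'_def badd_def)
    have x'nm: "\<not> x' m" using c0 by (auto simp: x'_def badd_def)
    have x'b: "x' \<in> bvecs (Suc m)" using Suc.prems(4) c0 Suc.prems(1)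
      by (auto simp: x'_def intro!: badd_bvecs)
    have x'm: "x' \<in> bvecs m" using x'b x'nm by (rule bvecs_SucD)
    have x'C: "x' \<notin> C"
    proof
      assume "x' \<in> C"
      show False
      proof (cases "x m")
        case True
        then have "badd (badd x c0) c0 \<in> C" using \<open>x' \<in> C\<close> c0 Suc.prems(3) by (simp add: x'_def)
        then show False using Suc.prems(5) by (simp add: badd_simps badd_cancel_left)
      next
        case False
        then show False using \<open>x' \<in> C\<close> Suc.prems(5) by (simp add: x'_def)
      qed
    qed
    then have "x' \<notin> C'" by (simp add: C'_def)
    from Suc.IH[OF C'sub z cl x'm this] Suc.prems(6)
    obtain v' where v': "v' \<in> bvecs m" "\<forall>c\<in>C'. even (bdot M c v')" "odd (bdot M x' v')" by auto
    define v where "v = (if even (bdot M c0 v') then v' else badd v' (unitv m))"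
    have vb: "v \<in> bvecs (Suc m)" using v' sub ue by (auto simp: v_def intro: badd_bvecs)
    have par: "even (bdot M y v) = (even (bdot M y v') = (even (bdot M c0 v') \<or> \<not> y m))" for y
      using mM by (auto simp: v_def bdot_badd_right bdot_unitv)
    have cC: "even (bdot M c v)" if "c \<in> C" for c
    proof (cases "c m")
      case True
      then have "badd c c0 \<in> C'" using that c0 Suc.prems(3) by (auto simp: C'_def badd_def)
      then have "even (bdot M (badd c c0) v')" using v' by auto
      then show ?thesis using par[of c] True by (simp add: bdot_badd_left)
    next
      case False
      then show ?thesis using par[of c] v' that by (auto simp: C'_def)
    qed
    have "odd (bdot M x' v)" using par[of x'] x'nm v' by simp
    then have "odd (bdot M x v)"
      using cC[OF c0(1)] by (cases "x m") (auto simp: x'_def bdot_badd_left)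
    then show ?thesis using vb cC by blast
  next
    case False
    then have Cm: "C \<subseteq> bvecs m" using Suc.prems(1)
      by (auto intro: bvecs_SucD)
    show ?thesis
    proof (cases "x m")
      case True
      have "\<forall>c\<in>C. even (bdot M c (unitv m))" using False mM by (auto simp: bdot_unitv)
      moreover have "odd (bdot M x (unitv m))" using True mM by (simp add: bdot_unitv)
      ultimately show ?thesis using ue by blast
    next
      case xf: False
      have "x \<in> bvecs m" using Suc.prems(4) xf by (rule bvecs_SucD)
      from Suc.IH[OF Cm Suc.prems(2,3) this Suc.prems(5)] Suc.prems(6) sub show ?thesis by auto
    qed
  qed
qed



lemma neg1_sq: "(-1::complex) ^ k * (-1) ^ k = 1"
  by (simp add: power_mult_distrib[symmetric])

lemma badd_x0: "badd (badd (badd bzero yz) L) u = badd (badd u yz) L"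
  by (auto simp: badd_def bzero_def fun_eq_iff)

context
  fixes n K :: nat and C1 C2 :: "bvec set" and w :: "nat \<Rightarrow> bvec"
  assumes hC1: "lin_code n C1" and hC2: "lin_code n C2" and hsub: "C2 \<subseteq> C1"
    and henc: "is_encoding n C1 C2 K w"
begin

lemma fC2: "finite C2"
  using hC2 finite_bvecs[of n] by (auto simp: lin_code_def intro: finite_subset)

lemma zC2: "bzero \<in> C2" using hC2 by (simp add: lin_code_def)

lemma sc_nz: "complex_of_real (1 / sqrt (real (card C2))) \<noteq> 0"
proof -
  have "card C2 > 0" using fC2 zC2 card_gt_0_iff by blast
  then show ?thesis by simp
qed

lemma Lin: "lincomb K w v \<in> C1"
  using lincomb_in[OF hC1] henc by (simp add: is_encoding_def)

lemma Lbv: "lincomb K w v \<in> bvecs n"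
  using Lin hC1 by (auto simp: lin_code_def)

lemma L1: "u \<in> C2 \<Longrightarrow> log_state n C2 yx yz K w v (badd (badd u yz) (lincomb K w v))
   = complex_of_real (1 / sqrt (real (card C2))) * (-1) ^ bdot n yx u"
  unfolding log_state_def by (simp add: badd_cancel fC2)

lemma L0: "\<forall>u\<in>C2. x \<noteq> badd (badd u yz) (lincomb K w v) \<Longrightarrow> log_state n C2 yx yz K w v x = 0"
  unfolding log_state_def by simp

lemma cross:
  assumes "v \<in> bvecs K" "v' \<in> bvecs K" "v \<noteq> v'"
  shows "log_state n C2 yx yz K w v' (badd (badd bzero yz) (lincomb K w v)) = 0"
proof (rule L0, rule ballI, rule notI)
  fix u assume u: "u \<in> C2" and e: "badd (badd bzero yz) (lincomb K w v) = badd (badd u yz) (lincomb K w v')"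
  have "u = badd (lincomb K w v) (lincomb K w v')"
    using e by (auto simp: badd_def bzero_def fun_eq_iff)
  then have "lincomb K w (badd v v') \<in> C2" using u by (simp add: lincomb_badd)
  moreover have "badd v v' \<in> bvecs K" using assms(1,2) by (rule badd_bvecs)
  ultimately have "badd v v' = bzero" using henc by (simp add: is_encoding_def)
  then have "v = v'" by (auto simp: badd_def bzero_def fun_eq_iff)
  then show False using assms by simp
qed

lemma enc_eval:
  assumes "v \<in> bvecs K"
  shows "encoder n C2 yx yz K w \<phi> (badd (badd bzero yz) (lincomb K w v))
     = \<phi> v * complex_of_real (1 / sqrt (real (card C2)))"
proof -
  have "encoder n C2 yx yz K w \<phi> (badd (badd bzero yz) (lincomb K w v))
     = \<phi> v * log_state n C2 yx yz K w v (badd (badd bzero yz) (lincomb K w v))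
       + (\<Sum>v'\<in>bvecs K - {v}. \<phi> v' * log_state n C2 yx yz K w v' (badd (badd bzero yz) (lincomb K w v)))"
    unfolding encoder_def using assms finite_bvecs by (simp add: sum.remove)
  also have "(\<Sum>v'\<in>bvecs K - {v}. \<phi> v' * log_state n C2 yx yz K w v' (badd (badd bzero yz) (lincomb K w v))) = 0"
    by (rule sum.neutral) (use cross assms in auto)
  finally show ?thesis using L1[OF zC2] by simp
qed

lemma enc_inj: "inj_on (encoder n C2 yx yz K w) (qstates K)"
proof (rule inj_onI)
  fix \<phi>1 \<phi>2 assume q: "\<phi>1 \<in> qstates K" "\<phi>2 \<in> qstates K"
    and e: "encoder n C2 yx yz K w \<phi>1 = encoder n C2 yx yz K w \<phi>2"
  show "\<phi>1 = \<phi>2"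
  proof
    fix v show "\<phi>1 v = \<phi>2 v"
    proof (cases "v \<in> bvecs K")
      case True
      then show ?thesis using enc_eval[OF True, of yx yz \<phi>1] enc_eval[OF True, of yx yz \<phi>2] e sc_nz
        by simp
    next
      case False
      then show ?thesis using q by (simp add: qstates_def)
    qed
  qed
qed

lemma la_eq:
  "\<psi> \<in> qstates K \<Longrightarrow> U (encoder n C2 yx yz K w \<phi>) = encoder n C2 yx yz K w \<psi>
   \<Longrightarrow> logical_action n C2 yx yz K w U \<phi> = \<psi>"
  unfolding logical_action_def using enc_inj by (simp add: inv_into_f_f)

lemma ls_code:
  assumes hyz: "yz \<in> bvecs n"
  shows "log_state n C2 yx yz K w v \<in> css_code n C1 C2 yx yz"
proof -
  let ?L = "lincomb K w v"
  let ?s = "complex_of_real (1 / sqrt (real (card C2)))"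
  have C2b: "u \<in> C2 \<Longrightarrow> u \<in> bvecs n" for u using hC2 by (auto simp: lin_code_def)
  have q: "log_state n C2 yx yz K w v \<in> qstates n"
    unfolding qstates_def
  proof (clarify)
    fix x assume x: "x \<notin> bvecs n"
    show "log_state n C2 yx yz K w v x = 0"
    proof (rule L0, rule ballI)
      fix u assume "u \<in> C2"
      then have "badd (badd u yz) ?L \<in> bvecs n" using C2b hyz Lbv by (simp add: badd_bvecs)
      then show "x \<noteq> badd (badd u yz) ?L" using x by auto
    qed
  qed
  have st: "(-1) ^ (bdot n yx u0 + bdot n yz v0) * XZop n u0 v0 (log_state n C2 yx yz K w v) x
       = log_state n C2 yx yz K w v x" if u0: "u0 \<in> C2" and v0: "v0 \<in> code_dual n C1" for u0 v0 x
  proof (cases "\<exists>u\<in>C2. x = badd (badd u yz) ?L")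
    case True
    then obtain u where u: "u \<in> C2" "x = badd (badd u yz) ?L" by blast
    have uu: "badd u u0 \<in> C2" using u u0 hC2 by (simp add: lin_code_def)
    have x1: "badd x u0 = badd (badd (badd u u0) yz) ?L" using u by (auto simp: badd_def fun_eq_iff)
    have x2: "badd x u0 = badd yz (badd (badd u u0) ?L)" using u by (auto simp: badd_def fun_eq_iff)
    have M: "badd (badd u u0) ?L \<in> C1" using uu hsub Lin hC1 by (auto simp: lin_code_def)
    have ev: "even (bdot n (badd (badd u u0) ?L) v0)" using M v0 by (simp add: code_dual_def)
    have par: "even (bdot n yx u0 + bdot n yz v0 + (bdot n v0 (badd x u0) + bdot n yx (badd u u0)))
       = even (bdot n yx u)"
    proof -
      have e1: "even (bdot n v0 (badd x u0)) = (even (bdot n v0 yz) = even (bdot n v0 (badd (badd u u0) ?L)))"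
        unfolding x2 by (rule bdot_badd_right)
      have e2: "even (bdot n v0 (badd (badd u u0) ?L))" using ev by (simp add: bdot_comm)
      have e3: "even (bdot n yx (badd u u0)) = (even (bdot n yx u) = even (bdot n yx u0))"
        by (rule bdot_badd_right)
      have e4: "bdot n yz v0 = bdot n v0 yz" by (rule bdot_comm)
      show ?thesis using e1 e2 e3 e4 by (auto simp: even_add)
    qed
    have "(-1) ^ (bdot n yx u0 + bdot n yz v0) * XZop n u0 v0 (log_state n C2 yx yz K w v) x
        = (-1) ^ (bdot n yx u0 + bdot n yz v0) * ((-1) ^ bdot n v0 (badd x u0) * (?s * (-1) ^ bdot n yx (badd u u0)))"
      unfolding XZop_def x1 using L1[OF uu] by simp
    also have "\<dots> = ?s * (-1) ^ (bdot n yx u0 + bdot n yz v0 + (bdot n v0 (badd x u0) + bdot n yx (badd u u0)))"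
      by (simp add: power_add mult_ac)
    also have "\<dots> = ?s * (-1) ^ bdot n yx u" using neg1_eq[OF par] by simp
    also have "\<dots> = log_state n C2 yx yz K w v x" using L1[OF u(1)] u(2) by simp
    finally show ?thesis .
  next
    case False
    have "\<forall>u\<in>C2. badd x u0 \<noteq> badd (badd u yz) ?L"
    proof (intro ballI notI)
      fix u assume u: "u \<in> C2" "badd x u0 = badd (badd u yz) ?L"
      have "badd u u0 \<in> C2" using u u0 hC2 by (simp add: lin_code_def)
      moreover have "x = badd (badd (badd u u0) yz) ?L" using u(2)
        by (auto simp: badd_def fun_eq_iff)
      ultimately show False using False by blast
    qed
    then have "log_state n C2 yx yz K w v (badd x u0) = 0" by (rule L0)
    moreover have "log_state n C2 yx yz K w v x = 0" using False by (intro L0) auto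
    ultimately show ?thesis by (simp add: XZop_def)
  qed
  show ?thesis unfolding css_code_def using q st by auto
qed

lemma bzero_dual: "bzero \<in> code_dual n C1"
proof -
  have "bzero \<in> bvecs n" by (simp add: bvecs_def bzero_def)
  then show ?thesis by (simp add: code_dual_def)
qed

lemma stab_X:
  assumes "\<psi> \<in> css_code n C1 C2 yx yz" "u \<in> C2"
  shows "\<psi> x = (-1) ^ bdot n yx u * \<psi> (badd x u)"
proof -
  have "(\<lambda>x. (-1) ^ (bdot n yx u + bdot n yz bzero) * XZop n u bzero \<psi> x) = \<psi>"
    using assms bzero_dual unfolding css_code_def by blast
  then have "(-1) ^ (bdot n yx u + bdot n yz bzero) * XZop n u bzero \<psi> x = \<psi> x" by metis
  then show ?thesis by (simp add: XZop_def)
qed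

lemma supp_C1:
  assumes "\<psi> \<in> css_code n C1 C2 bzero bzero" "\<psi> x \<noteq> 0"
  shows "x \<in> C1"
proof (rule ccontr)
  assume nx: "x \<notin> C1"
  have xb: "x \<in> bvecs n" using assms by (auto simp: css_code_def qstates_def)
  obtain v where v: "v \<in> bvecs n" "\<forall>c\<in>C1. even (bdot n c v)" "odd (bdot n x v)"
    using dual_sep[of C1 n x n] hC1 xb nx by (auto simp: lin_code_def)
  have vd: "v \<in> code_dual n C1" using v by (simp add: code_dual_def)
  have "(\<lambda>x. (-1) ^ (bdot n bzero bzero + bdot n bzero v) * XZop n bzero v \<psi> x) = \<psi>"
    using assms zC2 vd unfolding css_code_def by blast
  then have "(-1) ^ (bdot n bzero bzero + bdot n bzero v) * XZop n bzero v \<psi> x = \<psi> x" by metis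
  then have "(-1) ^ bdot n v x * \<psi> x = \<psi> x" by (simp add: XZop_def badd_simps)
  moreover have "odd (bdot n v x)" using v(3) by (simp add: bdot_comm)
  ultimately have "- \<psi> x = \<psi> x" by simp
  then show False using assms(2) by simp
qed

end



lemma const_lemma:
  assumes hC1: "lin_code n C1" and hC2: "lin_code n C2" and hsub: "C2 \<subseteq> C1"
    and henc: "is_encoding n C1 C2 K w" and hyz: "yz \<in> bvecs n"
    and hfix: "Uop N n b ` css_code n C1 C2 yx yz \<subseteq> css_code n C1 C2 yx yz"
    and u: "u \<in> C2"
  shows "omega_pow N (zdot n b (badd (badd u yz) (lincomb K w v)))
       = omega_pow N (zdot n b (badd (badd bzero yz) (lincomb K w v)))"
proof -
  let ?s = "complex_of_real (1 / sqrt (real (card C2)))"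
  let ?p = "log_state n C2 yx yz K w v"
  let ?x0 = "badd (badd bzero yz) (lincomb K w v)"
  let ?x1 = "badd (badd u yz) (lincomb K w v)"
  have "?p \<in> css_code n C1 C2 yx yz" by (rule ls_code[OF hC1 hC2 hsub henc hyz])
  then have "Uop N n b ?p \<in> css_code n C1 C2 yx yz" using hfix by blast
  from stab_X[OF hC1 hC2 hsub henc this u, of ?x0]
  have "Uop N n b ?p ?x0 = (-1) ^ bdot n yx u * Uop N n b ?p ?x1" by (simp add: badd_x0)
  moreover have "?p ?x0 = ?s" using L1[OF hC1 hC2 hsub henc zC2[OF hC1 hC2 hsub henc], of yx yz v] by simp
  moreover have "?p ?x1 = ?s * (-1) ^ bdot n yx u" using L1[OF hC1 hC2 hsub henc u] by simp
  ultimately have "omega_pow N (zdot n b ?x0) * ?s = ((-1) ^ bdot n yx u * (-1) ^ bdot n yx u) * omega_pow N (zdot n b ?x1) * ?s"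
    by (simp add: Uop_def mult_ac)
  then have "omega_pow N (zdot n b ?x0) * ?s = omega_pow N (zdot n b ?x1) * ?s" by (simp only: neg1_sq mult_1)
  then show ?thesis using sc_nz[OF hC1 hC2 hsub henc] by simp
qed

theorem corollary2p8:
  fixes l n K N :: nat and C1 C2 :: "bvec set" and yx yz :: bvec
    and b :: "nat \<Rightarrow> int" and w :: "nat \<Rightarrow> bvec"
  assumes hl: "l \<ge> 1" and hN: "N = 2 ^ l"
    and hC1: "lin_code n C1" and hC2: "lin_code n C2" and hsub: "C2 \<subseteq> C1"
    and hyx: "yx \<in> bvecs n" and hyz: "yz \<in> bvecs n"
    and hb: "\<forall>i<n. 0 \<le> b i \<and> b i < int N"
    and hfix: "Uop N n b ` css_code n C1 C2 yx yz = css_code n C1 C2 yx yz"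
    and henc: "is_encoding n C1 C2 K w"
  shows "(\<forall>\<phi>\<in>qstates K.
            logical_action n C2 yx yz K w (Uop N n b) \<phi>
          = logical_action n C2 bzero bzero K w (Uprime N n b yz) \<phi>)
       \<and> (transversal K (logical_action n C2 yx yz K w (Uop N n b))
            \<longrightarrow> transversal K (logical_action n C2 bzero bzero K w (Uprime N n b yz)))
       \<and> ((\<forall>\<psi>\<in>css_code n C1 C2 yx yz. Uop N n b \<psi> = \<psi>)
            \<longrightarrow> (\<forall>\<psi>\<in>css_code n C1 C2 bzero bzero. Uprime N n b yz \<psi> = \<psi>))"
proof -
  note ctx = hC1 hC2 hsub henc
  have Npos: "N > 0" using hN by simp
  have hfix': "Uop N n b ` css_code n C1 C2 yx yz \<subseteq> css_code n C1 C2 yx yz" using hfix by simp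
  define lam where "lam v = omega_pow N (zdot n b (badd (badd bzero yz) (lincomb K w v)))" for v
  have cst: "u \<in> C2 \<Longrightarrow> omega_pow N (zdot n b (badd (badd u yz) (lincomb K w v))) = lam v" for u v
    unfolding lam_def by (rule const_lemma[OF ctx hyz hfix'])
  have pw1: "omega_pow N (zdot n b x) * log_state n C2 yx yz K w v x = lam v * log_state n C2 yx yz K w v x" for v x
  proof (cases "\<exists>u\<in>C2. x = badd (badd u yz) (lincomb K w v)")
    case True
    then obtain u where "u \<in> C2" "x = badd (badd u yz) (lincomb K w v)" by blast
    then show ?thesis using cst by simp
  next
    case False
    then show ?thesis using L0[OF ctx] by (simp del: bex_simps) (metis mult_zero_right)
  qed
  have pw2: "omega_pow N (zdot n b yz) * (omega_pow N (zdot n (bflip N b yz) x) * log_state n C2 bzero bzero K w v x)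
      = lam v * log_state n C2 bzero bzero K w v x" for v x
  proof (cases "\<exists>u\<in>C2. x = badd (badd u bzero) (lincomb K w v)")
    case True
    then obtain u where u: "u \<in> C2" "x = badd (badd u bzero) (lincomb K w v)" by blast
    have "badd x yz = badd (badd u yz) (lincomb K w v)" using u(2) by (auto simp: badd_def bzero_def fun_eq_iff)
    then have "omega_pow N (zdot n b yz) * omega_pow N (zdot n (bflip N b yz) x) = lam v"
      using key_identity[OF Npos] cst[OF u(1)] by simp
    then show ?thesis by (simp add: mult.assoc[symmetric])
  next
    case False
    then have "log_state n C2 bzero bzero K w v x = 0" using L0[OF ctx] by blast
    then show ?thesis by simp
  qed
  have P1: "\<forall>\<phi>\<in>qstates K.
            logical_action n C2 yx yz K w (Uop N n b) \<phi>
          = logical_action n C2 bzero bzero K w (Uprime N n b yz) \<phi>"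
  proof
    fix \<phi> :: "bvec \<Rightarrow> complex" assume "\<phi> \<in> qstates K"
    define \<psi> where "\<psi> v = (if v \<in> bvecs K then lam v * \<phi> v else 0)" for v
    have q: "\<psi> \<in> qstates K" by (simp add: \<psi>_def qstates_def)
    have e1: "Uop N n b (encoder n C2 yx yz K w \<phi>) = encoder n C2 yx yz K w \<psi>"
    proof
      fix x
      have "Uop N n b (encoder n C2 yx yz K w \<phi>) x
          = (\<Sum>v\<in>bvecs K. \<phi> v * (omega_pow N (zdot n b x) * log_state n C2 yx yz K w v x))"
        by (simp add: Uop_def encoder_def sum_distrib_left mult_ac)
      also have "\<dots> = (\<Sum>v\<in>bvecs K. \<psi> v * log_state n C2 yx yz K w v x)"
        by (rule sum.cong) (simp_all add: pw1 \<psi>_def mult_ac)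
      finally show "Uop N n b (encoder n C2 yx yz K w \<phi>) x = encoder n C2 yx yz K w \<psi> x"
        by (simp add: encoder_def)
    qed
    have e2: "Uprime N n b yz (encoder n C2 bzero bzero K w \<phi>) = encoder n C2 bzero bzero K w \<psi>"
    proof
      fix x
      have "Uprime N n b yz (encoder n C2 bzero bzero K w \<phi>) x
          = (\<Sum>v\<in>bvecs K. \<phi> v * (omega_pow N (zdot n b yz) * (omega_pow N (zdot n (bflip N b yz) x) * log_state n C2 bzero bzero K w v x)))"
        by (simp add: Uprime_def Uop_def encoder_def sum_distrib_left mult_ac)
      also have "\<dots> = (\<Sum>v\<in>bvecs K. \<psi> v * log_state n C2 bzero bzero K w v x)"
        by (rule sum.cong) (simp_all only: pw2, simp_all add: \<psi>_def mult_ac)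
      finally show "Uprime N n b yz (encoder n C2 bzero bzero K w \<phi>) x = encoder n C2 bzero bzero K w \<psi> x"
        by (simp add: encoder_def)
    qed
    show "logical_action n C2 yx yz K w (Uop N n b) \<phi>
          = logical_action n C2 bzero bzero K w (Uprime N n b yz) \<phi>"
      using la_eq[where U="Uop N n b", OF ctx q e1] la_eq[where U="Uprime N n b yz", OF ctx q e2] by simp
  qed
  have P2: "transversal K (logical_action n C2 yx yz K w (Uop N n b))
            \<longrightarrow> transversal K (logical_action n C2 bzero bzero K w (Uprime N n b yz))"
    using P1 unfolding transversal_def by auto
  have P3: "(\<forall>\<psi>\<in>css_code n C1 C2 yx yz. Uop N n b \<psi> = \<psi>)
            \<longrightarrow> (\<forall>\<psi>\<in>css_code n C1 C2 bzero bzero. Uprime N n b yz \<psi> = \<psi>)"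
  proof (intro impI ballI ext)
    fix \<psi> x assume fixall: "\<forall>\<psi>\<in>css_code n C1 C2 yx yz. Uop N n b \<psi> = \<psi>"
      and \<psi>: "\<psi> \<in> css_code n C1 C2 bzero bzero"
    show "Uprime N n b yz \<psi> x = \<psi> x"
    proof (cases "\<psi> x = 0")
      case True
      then show ?thesis by (simp add: Uprime_def Uop_def)
    next
      case False
      then have "x \<in> C1" by (rule supp_C1[OF ctx \<psi>])
      then obtain v where v: "v \<in> bvecs K" "badd x (lincomb K w v) \<in> C2"
        using henc by (auto simp: is_encoding_def)
      define u where "u = badd x (lincomb K w v)"
      have u: "u \<in> C2" using v by (simp add: u_def)
      have x1: "badd x yz = badd (badd u yz) (lincomb K w v)" by (auto simp: u_def badd_def fun_eq_iff)
      let ?p = "log_state n C2 yx yz K w v"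
      have "?p \<in> css_code n C1 C2 yx yz" by (rule ls_code[OF ctx hyz])
      then have "Uop N n b ?p (badd (badd u yz) (lincomb K w v)) = ?p (badd (badd u yz) (lincomb K w v))"
        using fixall by simp
      then have "omega_pow N (zdot n b (badd (badd u yz) (lincomb K w v))) *
         (complex_of_real (1 / sqrt (real (card C2))) * (-1) ^ bdot n yx u) = 
         (complex_of_real (1 / sqrt (real (card C2))) * (-1) ^ bdot n yx u)"
        using L1[OF ctx u, of yx yz v] by (simp add: Uop_def)
      moreover have "complex_of_real (1 / sqrt (real (card C2))) * (-1) ^ bdot n yx u \<noteq> 0"
        using sc_nz[OF ctx] by simp
      ultimately have om: "omega_pow N (zdot n b (badd x yz)) = 1" unfolding x1 by simp
      show ?thesis using key_identity[OF Npos, of n b yz x] om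
        by (simp add: Uprime_def Uop_def mult.assoc[symmetric])
    qed
  qed
  show ?thesis using P1 P2 P3 by blast
qed

end
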